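(* Let $h>0$, $r_0>0$, $a_1>|a_2|$, and let $A,B,c_0,C_0$ be as in the context. Fix $\rho_0>0$ and $\beta\in\big(0,\frac{h^2+h\sqrt{h^2+r_0^2}}{r_0^2+h^2+h\sqrt{h^2+r_0^2}}\big)$ (note this ratio equals $c_0/C_0$). For $n\in\mathbb N$ let $P_1^0,P_2^0\in\mathbb R^2$ (possibly depending on $n$) satisfy $|P_1^0-P_2^0|=4\rho_0/n$, put $\rho=\beta\rho_0/n$, let $x(t)$ be the solution of $\dot x=\nabla^\perp\mathcal H(x)$ with $x(0)=DT(x_0)(P_1^0-P_2^0)$, let $E=\mathcal H(x(0))$, and $C_E=\exp\big(\frac{2E}{(a_1+a_2)A}\big)$. Then for every $k\in\mathbb N$ there exists $N_0$ such that for all $n>N_0$: $C_E<C^*$, the solution $x(t)$ is periodic with some period $T_E>0$, and with $T=(k+1)T_E$, $$\min_{t\in[0,T]}|DT(x_0)^{-1}x(t)|\ \ge\ 4\rho.$$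
   Context: Let $g(s)=\frac{1}{2(h\sqrt{s+h^2}+h^2)}$, $\tau(s)=\exp(\int_0^sg(z)dz)$, $T(x)=\tau(|x|^2)x$ for $x\in\mathbb R^2$, $x_0=(r_0,0)$, so $DT(x_0)=\tau(r_0^2)\,\mathrm{diag}\big(1+\frac{r_0^2}{h^2+h\sqrt{h^2+r_0^2}},\,1\big)$. Let $c_0=\tau(r_0^2)$ and $C_0=\tau(r_0^2)\big(1+\frac{r_0^2}{h^2+h\sqrt{h^2+r_0^2}}\big)$. Let $A=\frac{\sqrt{h^2+r_0^2}\,(r_0^2+h^2+h\sqrt{h^2+r_0^2})}{2\pi h\,(h^2+h\sqrt{h^2+r_0^2})}$ and $B=\frac{\tau(r_0^2)r_0}{4\pi h\sqrt{h^2+r_0^2}}$. For two points $\tilde P_1,\tilde P_2$ solving $\dot{\tilde P}_1=Aa_2\frac{(\tilde P_1-\tilde P_2)^\perp}{|\tilde P_1-\tilde P_2|^2}-a_1B(0,1)^T$, $\dot{\tilde P}_2=Aa_1\frac{(\tilde P_2-\tilde P_1)^\perp}{|\tilde P_1-\tilde P_2|^2}-a_2B(0,1)^T$ (with $a^\perp=(-a_2,a_1)$), the difference $x=\tilde P_1-\tilde P_2$ solves the Hamiltonian system $\dot x=\nabla^\perp\mathcal H(x)$ with $\mathcal H(x)=(a_1+a_2)A\ln|x|-(a_1-a_2)Bx_1$, $x=(x_1,x_2)$. Let $a'=\frac{(a_1+a_2)A}{2(a_1-a_2)B}$, so $\mathcal H$ has a unique critical point $x^*=(2a',0)$, and $C^*=(2a'/e)^2$.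 The relation $P_1(t)-P_2(t)=DT(x_0)^{-1}x(t)$ holds. *)

theory Defs
  imports "HOL-Analysis.Analysis"
begin

definition g_fun :: "real \<Rightarrow> real \<Rightarrow> real" where
  "g_fun h s = 1 / (2 * (h * sqrt (s + h^2) + h^2))"

definition tau :: "real \<Rightarrow> real \<Rightarrow> real" where
  "tau h s = exp (integral {0..s} (g_fun h))"

definition c0 :: "real \<Rightarrow> real \<Rightarrow> real" where
  "c0 h r0 = tau h (r0^2)"

definition C0 :: "real \<Rightarrow> real \<Rightarrow> real" where
  "C0 h r0 = tau h (r0^2) * (1 + r0^2 / (h^2 + h * sqrt (h^2 + r0^2)))"

definition DT :: "real \<Rightarrow> real \<Rightarrow> real \<times> real \<Rightarrow> real \<times> real" where
  "DT h r0 y = (C0 h r0 * fst y, c0 h r0 * snd y)"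

definition DT_inv :: "real \<Rightarrow> real \<Rightarrow> real \<times> real \<Rightarrow> real \<times> real" where
  "DT_inv h r0 y = (fst y / C0 h r0, snd y / c0 h r0)"

definition A_const :: "real \<Rightarrow> real \<Rightarrow> real" where
  "A_const h r0 = sqrt (h^2 + r0^2) * (r0^2 + h^2 + h * sqrt (h^2 + r0^2))
      / (2 * pi * h * (h^2 + h * sqrt (h^2 + r0^2)))"

definition B_const :: "real \<Rightarrow> real \<Rightarrow> real" where
  "B_const h r0 = tau h (r0^2) * r0 / (4 * pi * h * sqrt (h^2 + r0^2))"

definition Ham :: "real \<Rightarrow> real \<Rightarrow> real \<Rightarrow> real \<Rightarrow> real \<times> real \<Rightarrow> real" where
  "Ham h r0 a1 a2 x = (a1 + a2) * A_const h r0 * ln (norm x) - (a1 - a2) * B_const h r0 * fst x"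

definition Ham_field :: "real \<Rightarrow> real \<Rightarrow> real \<Rightarrow> real \<Rightarrow> real \<times> real \<Rightarrow> real \<times> real" where
  "Ham_field h r0 a1 a2 x =
     (- ((a1 + a2) * A_const h r0 * snd x / (norm x)^2),
      (a1 + a2) * A_const h r0 * fst x / (norm x)^2 - (a1 - a2) * B_const h r0)"

definition a_prime :: "real \<Rightarrow> real \<Rightarrow> real \<Rightarrow> real \<Rightarrow> real" where
  "a_prime h r0 a1 a2 = (a1 + a2) * A_const h r0 / (2 * (a1 - a2) * B_const h r0)"

definition C_star :: "real \<Rightarrow> real \<Rightarrow> real \<Rightarrow> real \<Rightarrow> real" where
  "C_star h r0 a1 a2 = (2 * a_prime h r0 a1 a2 / exp 1)^2"

end

theory Submission
  imports Defs
begin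


lemma mvt_helper:
  fixes f f' :: "real \<Rightarrow> real"
  assumes "a < b" "continuous_on {a..b} f"
    "\<And>x. a < x \<Longrightarrow> x < b \<Longrightarrow> (f has_real_derivative f' x) (at x)"
  shows "\<exists>z. a < z \<and> z < b \<and> f b - f a = (b - a) * f' z"
proof -
  obtain l z where "a < z" "z < b" "DERIV f z :> l" "f b - f a = (b - a) * l"
    using MVT[OF assms(1,2)] assms(3) real_differentiable_def by blast
  moreover have "l = f' z" using DERIV_unique calculation assms(3) by blast
  ultimately show ?thesis by blast
qed

lemma vd_fst:
  assumes "(x has_vector_derivative v) F"
  shows "((\<lambda>t. fst (x t)) has_real_derivative fst v) F"
  using has_derivative_fst[OF assms[unfolded has_vector_derivative_def]]
  by (simp add: has_real_derivative_iff_has_vector_derivative has_vector_derivative_def)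

lemma vd_snd:
  assumes "(x has_vector_derivative v) F"
  shows "((\<lambda>t. snd (x t)) has_real_derivative snd v) F"
  using has_derivative_snd[OF assms[unfolded has_vector_derivative_def]]
  by (simp add: has_real_derivative_iff_has_vector_derivative has_vector_derivative_def)

lemma norm_sq_pair: "(norm (y::real\<times>real))^2 = (fst y)^2 + (snd y)^2"
  by (cases y) (simp add: norm_Pair)

lemma gronwall0:
  fixes u u' :: "real \<Rightarrow> real" and K :: real
  assumes cont: "\<And>T. continuous_on {0..T} u"
    and der: "\<And>t. t > 0 \<Longrightarrow> (u has_real_derivative u' t) (at t)"
    and bd: "\<And>t. t > 0 \<Longrightarrow> u' t \<le> K * u t"
    and nn: "\<And>t. t \<ge> 0 \<Longrightarrow> u t \<ge> 0"
    and u0: "u 0 = 0"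
  shows "\<And>t. t \<ge> 0 \<Longrightarrow> u t = 0"
proof -
  fix t :: real assume t: "t \<ge> 0"
  show "u t = 0"
  proof (cases "t = 0")
    case True then show ?thesis using u0 by simp
  next
    case False
    then have tp: "t > 0" using t by simp
    define v where "v s = u s * exp (- K * s)" for s
    define v' where "v' s = u' s * exp (- K * s) + u s * (exp (- K * s) * (- K))" for s
    have "continuous_on {0..t} v" unfolding v_def
      by (intro continuous_intros cont)
    moreover have "\<And>s. 0 < s \<Longrightarrow> s < t \<Longrightarrow> (v has_real_derivative v' s) (at s)"
      unfolding v_def v'_def
      by (rule derivative_eq_intros der refl | simp)+
    ultimately obtain z where z: "0 < z" "z < t" "v t - v 0 = (t - 0) * v' z"
      using mvt_helper[OF tp] by blast
    have "v' z = (u' z - K * u z) * exp (- K * z)" unfolding v'_def by (simp add: algebra_simps)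
    also have "\<dots> \<le> 0" using bd[of z] z(1) by (simp add: mult_nonpos_nonneg)
    finally have "v t \<le> 0" using z(3) u0 tp unfolding v_def
      by (simp add: mult_nonneg_nonpos)
    then have "u t \<le> 0" unfolding v_def by (simp add: mult_le_0_iff)
    then show ?thesis using nn[OF t] by simp
  qed
qed

definition Fv :: "real \<Rightarrow> real \<Rightarrow> real \<times> real \<Rightarrow> real \<times> real" where
  "Fv al b y = (- (al * snd y / (norm y)^2), al * fst y / (norm y)^2 - b)"

definition Hf :: "real \<Rightarrow> real \<Rightarrow> real \<times> real \<Rightarrow> real" where
  "Hf al b y = al * ln (norm y) - b * fst y"

lemma ln_norm_eq: "ln (norm (y::real\<times>real)) = ln ((fst y)^2 + (snd y)^2) / 2"
proof (cases "(fst y)^2 + (snd y)^2 = 0")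
  case True then show ?thesis by (cases y) (simp add: norm_Pair)
next
  case False then have "(fst y)^2 + (snd y)^2 > 0"
    by (metis add_nonneg_nonneg zero_le_power2 less_eq_real_def)
  then show ?thesis by (cases y) (simp add: norm_Pair ln_sqrt)
qed

lemma H_deriv:
  assumes d: "(x has_vector_derivative Fv al b (x t)) (at t within S)" and nz: "x t \<noteq> 0"
  shows "((\<lambda>t. Hf al b (x t)) has_real_derivative 0) (at t within S)"
proof -
  define X where "X = (fst (x t))^2 + (snd (x t))^2"
  have Xn: "(norm (x t))^2 = X" unfolding X_def by (rule norm_sq_pair)
  have Xp: "X > 0" using nz Xn by (metis zero_less_norm_iff zero_less_power)
  have d1: "((\<lambda>t. fst (x t)) has_real_derivative - (al * snd (x t) / X)) (at t within S)"
    using vd_fst[OF d] by (simp add: Fv_def Xn)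
  have d2: "((\<lambda>t. snd (x t)) has_real_derivative al * fst (x t) / X - b) (at t within S)"
    using vd_snd[OF d] by (simp add: Fv_def Xn)
  have eq: "(\<lambda>t. Hf al b (x t)) = (\<lambda>t. al * (ln ((fst (x t))^2 + (snd (x t))^2) / 2) - b * fst (x t))"
    by (simp add: Hf_def ln_norm_eq)
  have "((\<lambda>t. al * (ln ((fst (x t))^2 + (snd (x t))^2) / 2) - b * fst (x t)) has_real_derivative
     al * ((2 * fst (x t) * (- (al * snd (x t) / X)) + 2 * snd (x t) * (al * fst (x t) / X - b)) / X / 2)
       - b * (- (al * snd (x t) / X))) (at t within S)"
    apply (rule derivative_eq_intros d1 d2 refl | simp add: X_def[symmetric] Xp)+
    apply (insert Xp)
    apply (simp add: field_simps)
    done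
  moreover have "al * ((2 * fst (x t) * (- (al * snd (x t) / X)) + 2 * snd (x t) * (al * fst (x t) / X - b)) / X / 2)
       - b * (- (al * snd (x t) / X)) = 0"
    using Xp by (simp add: field_simps)
  ultimately show ?thesis unfolding eq by simp
qed

lemma fst_bd: "\<bar>fst y\<bar> \<le> norm (y::real\<times>real)"
  using norm_fst_le[of "fst y" "snd y"] by simp

lemma snd_bd: "\<bar>snd y\<bar> \<le> norm (y::real\<times>real)"
  using norm_snd_le[of "snd y" "fst y"] by simp

lemma fst_mul_bd:
  assumes "b \<ge> 0" shows "b * fst y \<le> b * norm (y::real\<times>real)" "- (b * norm y) \<le> b * fst y"
proof -
  have "fst y \<le> norm y" "- norm y \<le> fst y" using fst_bd[of y] by linarith+
  then show "b * fst y \<le> b * norm (y::real\<times>real)" "- (b * norm y) \<le> b * fst y"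
    using mult_left_mono[OF _ assms] by (auto, metis minus_mult_right mult_left_mono assms)
qed

lemma der_at:
  assumes "\<forall>t\<ge>0. (x has_vector_derivative f (x t)) (at t within {0..})" "t > 0"
  shows "(x has_vector_derivative f (x t)) (at t)"
proof -
  have "t \<in> interior {0..}" using assms(2) by simp
  then have "at t within {0..} = at t" by (rule at_within_interior)
  moreover have "(x has_vector_derivative f (x t)) (at t within {0..})" using assms by simp
  ultimately show ?thesis by simp
qed

lemma core_bounds:
  fixes al b :: real and x :: "real \<Rightarrow> real \<times> real"
  assumes al: "al > 0" and b: "b > 0"
    and der: "\<forall>t\<ge>0. (x has_vector_derivative Fv al b (x t)) (at t within {0..})"
    and x0: "x 0 \<noteq> 0"
    and small: "norm (x 0) < al / (2 * b)"
    and small2: "al * ln (norm (x 0)) + b * norm (x 0) < al * ln (al / (2 * b)) - b * (al / (2 * b))"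
  shows "\<forall>t\<ge>0. Hf al b (x t) = Hf al b (x 0) \<and> 0 < norm (x t) \<and> norm (x t) < al / (2 * b)"
proof -
  define E where "E = Hf al b (x 0)"
  define rs where "rs = al / (2 * b)"
  have cont: "continuous_on {0..} x"
    by (rule continuous_on_vector_derivative) (use der in auto)
  have nz: "x t \<noteq> 0" if t: "t \<ge> 0" for t
  proof (rule ccontr)
    assume "\<not> x t \<noteq> 0"
    define Z where "Z = {s \<in> {0..}. x s = 0}"
    have Zc: "closed Z" unfolding Z_def
      by (rule continuous_closed_preimage_constant[OF cont closed_atLeast])
    have Zne: "Z \<noteq> {}" using t \<open>\<not> x t \<noteq> 0\<close> unfolding Z_def by auto
    have Zb: "bdd_below Z" unfolding Z_def by (rule bdd_belowI[of _ 0]) auto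
    define ts where "ts = Inf Z"
    have tsZ: "ts \<in> Z" unfolding ts_def using closed_contains_Inf[OF Zne Zb Zc] .
    then have ts0: "ts \<ge> 0" "x ts = 0" unfolding Z_def by auto
    have "ts \<noteq> 0" using ts0(2) x0 by auto
    with ts0(1) have tsp: "ts > 0" by simp
    have nzb: "x s \<noteq> 0" if "0 \<le> s" "s < ts" for s
    proof
      assume "x s = 0"
      then have "s \<in> Z" unfolding Z_def using that by auto
      then have "ts \<le> s" unfolding ts_def using Zb by (simp add: cInf_lower)
      then show False using that by simp
    qed
    have cons: "Hf al b (x s) = E" if s: "0 \<le> s" "s < ts" for s
    proof -
      have "\<exists>c. \<forall>u\<in>{0..s}. Hf al b (x u) = c"
      proof (rule has_field_derivative_zero_constant)
        show "convex {0..s}" by simp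
        fix u assume u: "u \<in> {0..s}"
        have "(x has_vector_derivative Fv al b (x u)) (at u within {0..})"
          using der u by simp
        then have "(x has_vector_derivative Fv al b (x u)) (at u within {0..s})"
          by (rule has_vector_derivative_within_subset) auto
        then show "((\<lambda>u. Hf al b (x u)) has_field_derivative 0) (at u within {0..s})"
        proof (rule H_deriv)
          show "x u \<noteq> 0" using nzb u s by simp
        qed
      qed
      then obtain c where "\<forall>u\<in>{0..s}. Hf al b (x u) = c" by blast
      then show ?thesis unfolding E_def using s by auto
    qed
    define L where "L = min 1 (exp ((E - b) / al))"
    have Lp: "L > 0" unfolding L_def by simp
    have lb: "norm (x s) \<ge> L" if s: "0 \<le> s" "s < ts" for s
    proof (cases "norm (x s) < 1")
      case True
      have np: "norm (x s) > 0" using nzb[OF s] by simp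
      have "al * ln (norm (x s)) = E + b * fst (x s)" using cons[OF s] unfolding Hf_def by simp
      also have "\<dots> \<ge> E - b * norm (x s)" using fst_mul_bd[of b "x s"] b by simp
      finally have "al * ln (norm (x s)) \<ge> E - b * norm (x s)" .
      moreover have "b * norm (x s) \<le> b" using True b mult_left_mono[of "norm (x s)" 1 b] by simp
      ultimately have "al * ln (norm (x s)) \<ge> E - b" by simp
      then have "ln (norm (x s)) \<ge> (E - b) / al" using al by (simp add: field_simps)
      then have "exp ((E - b) / al) \<le> norm (x s)" using np
        by (metis exp_le_cancel_iff exp_ln)
      then show ?thesis unfolding L_def by simp
    next
      case False then show ?thesis unfolding L_def by simp
    qed
    have "\<forall>e>0. \<exists>d>0. \<forall>s\<in>{0..}. dist s ts < d \<longrightarrow> dist (x s) (x ts) < e"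
      using cont ts0(1) unfolding continuous_on_iff by blast
    then obtain d where d: "d > 0" "\<forall>s\<in>{0..}. dist s ts < d \<longrightarrow> dist (x s) (x ts) < L"
      using Lp by blast
    define s where "s = max 0 (ts - d / 2)"
    have s: "0 \<le> s" "s < ts" "dist s ts < d" unfolding s_def using d tsp
      by (auto simp: dist_real_def)
    then have "norm (x s) < L" using d(2) ts0 by (simp add: dist_norm)
    then show False using lb[OF s(1,2)] by simp
  qed
  have "\<exists>c. \<forall>u\<in>{0..}. Hf al b (x u) = c"
  proof (rule has_field_derivative_zero_constant)
    show "convex {0::real..}" by simp
    fix u :: real assume u: "u \<in> {0..}"
    then show "((\<lambda>u. Hf al b (x u)) has_field_derivative 0) (at u within {0..})"
      using der nz by (intro H_deriv) auto
  qed
  then have cons: "\<forall>t\<ge>0. Hf al b (x t) = E" unfolding E_def by force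
  have ub: "norm (x t) < rs" if t: "t \<ge> 0" for t
  proof (rule ccontr)
    assume "\<not> norm (x t) < rs"
    then have "norm (x 0) \<le> rs" "rs \<le> norm (x t)" using small rs_def by auto
    moreover have "continuous_on {0..t} (\<lambda>s. norm (x s))"
      by (intro continuous_intros continuous_on_subset[OF cont]) auto
    ultimately obtain s where s: "0 \<le> s" "s \<le> t" "norm (x s) = rs"
      using IVT'[of "\<lambda>s. norm (x s)" 0 rs t] t by auto
    have "E = al * ln rs - b * fst (x s)" using cons s unfolding Hf_def by auto
    also have "\<dots> \<ge> al * ln rs - b * rs" using fst_mul_bd[of b "x s"] s b by simp
    finally have e1: "E \<ge> al * ln rs - b * rs" .
    have "E \<le> al * ln (norm (x 0)) + b * norm (x 0)" unfolding E_def Hf_def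
      using fst_mul_bd[of b "x 0"] b by simp
    then show False using e1 small2 unfolding rs_def by linarith
  qed
  show ?thesis
  proof (intro allI impI conjI)
    fix t :: real assume t: "t \<ge> 0"
    show "Hf al b (x t) = Hf al b (x 0)" using cons t unfolding E_def by blast
    show "0 < norm (x t)" using nz[OF t] by simp
    show "norm (x t) < al / (2 * b)" using ub[OF t] unfolding rs_def .
  qed
qed



lemma Hray_mono:
  fixes al b c r s :: real
  assumes "al > 0" "b > 0" "c \<le> 1" "0 < r" "r < s" "s < al / (2 * b)"
  shows "al * ln r - b * (r * c) < al * ln s - b * (s * c)"
proof -
  have "ln (r / s) \<le> r / s - 1" using assms by (intro ln_le_minus_one) simp
  then have l: "ln s - ln r \<ge> (s - r) / s" using assms by (simp add: ln_div diff_divide_distrib)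
  have "al / s > 2 * b" using assms by (simp add: field_simps)
  then have "al * ((s - r) / s) > b * (s - r)" using assms
    by (smt (verit) mult_strict_right_mono times_divide_eq_left mult.commute)
  moreover have "al * (ln s - ln r) \<ge> al * ((s - r) / s)" using mult_left_mono[OF l less_imp_le[OF assms(1)]] .
  moreover have "b * (c * (s - r)) \<le> b * (s - r)" using assms
    by (intro mult_left_mono) (auto simp: mult_left_le)
  ultimately show ?thesis by (simp add: algebra_simps)
qed

lemma inv_id:
  fixes x1 x2 y1 y2 :: real
  assumes "X = x1^2 + x2^2" "Y = y1^2 + y2^2" "X > 0" "Y > 0"
  shows "(x2 / X - y2 / Y)^2 + (x1 / X - y1 / Y)^2 = ((x1 - y1)^2 + (x2 - y2)^2) / (X * Y)"
proof -
  define d where "d = x1 * y1 + x2 * y2"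
  have XY: "X \<noteq> 0" "Y \<noteq> 0" using assms by auto
  have "(x2 / X - y2 / Y)^2 + (x1 / X - y1 / Y)^2
      = ((x1^2 + x2^2) * Y^2 - 2 * d * X * Y + (y1^2 + y2^2) * X^2) / (X^2 * Y^2)"
    using XY unfolding d_def by (simp add: field_simps power2_eq_square)
  also have "\<dots> = (X * Y^2 - 2 * d * X * Y + Y * X^2) / (X^2 * Y^2)" using assms(1,2) by simp
  also have "\<dots> = (X + Y - 2 * d) / (X * Y)" using XY by (simp add: field_simps power2_eq_square)
  also have "X + Y - 2 * d = (x1 - y1)^2 + (x2 - y2)^2" unfolding assms(1,2) d_def
    by (simp add: power2_eq_square algebra_simps)
  finally show ?thesis .
qed

lemma dot_bd:
  fixes a1 a2 B1 B2 K :: real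
  assumes "K > 0" "B1^2 + B2^2 \<le> K^2 * (a1^2 + a2^2)"
  shows "a1 * B1 + a2 * B2 \<le> K * (a1^2 + a2^2)"
proof -
  have "0 \<le> (K * a1 - B1)^2 + (K * a2 - B2)^2" by simp
  then have "2 * K * (a1 * B1 + a2 * B2) \<le> K^2 * (a1^2 + a2^2) + (B1^2 + B2^2)"
    by (simp add: power2_eq_square algebra_simps)
  also have "\<dots> \<le> 2 * K * (K * (a1^2 + a2^2))" using assms(2) by (simp add: power2_eq_square algebra_simps)
  finally show ?thesis using assms(1) by simp
qed


lemma uniq:
  fixes al b L :: real and x y :: "real \<Rightarrow> real \<times> real"
  assumes al: "al > 0" and L: "L > 0"
    and cx: "continuous_on {0..} x" and cy: "continuous_on {0..} y"
    and dx: "\<And>t. t > 0 \<Longrightarrow> (x has_vector_derivative Fv al b (x t)) (at t)"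
    and dy: "\<And>t. t > 0 \<Longrightarrow> (y has_vector_derivative Fv al b (y t)) (at t)"
    and lx: "\<And>t. t \<ge> 0 \<Longrightarrow> L \<le> norm (x t)"
    and ly: "\<And>t. t \<ge> 0 \<Longrightarrow> L \<le> norm (y t)"
    and e0: "x 0 = y 0"
  shows "\<And>t. t \<ge> 0 \<Longrightarrow> x t = y t"
proof -
  define K where "K = al / L^2"
  have Kp: "K > 0" unfolding K_def using al L by simp
  define u where "u t = (fst (x t) - fst (y t))^2 + (snd (x t) - snd (y t))^2" for t
  define B1 where "B1 t = - (al * snd (x t) / (norm (x t))^2) - - (al * snd (y t) / (norm (y t))^2)" for t
  define B2 where "B2 t = (al * fst (x t) / (norm (x t))^2 - b) - (al * fst (y t) / (norm (y t))^2 - b)" for t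
  define u' where "u' t = 2 * (fst (x t) - fst (y t)) * B1 t + 2 * (snd (x t) - snd (y t)) * B2 t" for t
  have uz: "u t = 0" if t: "t \<ge> 0" for t
  proof (rule gronwall0[where u = u and u' = u' and K = "2 * K"])
    show "continuous_on {0..T} u" for T
      unfolding u_def
      by (intro continuous_intros continuous_on_subset[OF cx] continuous_on_subset[OF cy]) auto
    show "(u has_real_derivative u' t) (at t)" if "t > 0" for t
    proof -
      note d1 = vd_fst[OF dx[OF that]] and d2 = vd_snd[OF dx[OF that]]
        and e1 = vd_fst[OF dy[OF that]] and e2 = vd_snd[OF dy[OF that]]
      show ?thesis unfolding u_def u'_def B1_def B2_def
        by (rule derivative_eq_intros d1 d2 e1 e2 refl | simp add: Fv_def)+ (simp add: divide_inverse algebra_simps)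
    qed
    show "u' t \<le> 2 * K * u t" if t: "t > 0" for t
    proof -
      define X where "X = (norm (x t))^2"
      define Y where "Y = (norm (y t))^2"
      have X: "X = (fst (x t))^2 + (snd (x t))^2" unfolding X_def by (rule norm_sq_pair)
      have Y: "Y = (fst (y t))^2 + (snd (y t))^2" unfolding Y_def by (rule norm_sq_pair)
      have XL: "X \<ge> L^2" unfolding X_def using lx[of t] t L by (intro power_mono) auto
      have YL: "Y \<ge> L^2" unfolding Y_def using ly[of t] t L by (intro power_mono) auto
      have Xp: "X > 0" "Y > 0" using XL YL L by (smt (verit) zero_less_power)+
      have XY: "X * Y \<ge> L^2 * L^2" using XL YL L Xp by (intro mult_mono) auto
      have b1: "B1 t = - al * (snd (x t) / X - snd (y t) / Y)" unfolding B1_def X_def Y_def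
        by (simp add: algebra_simps)
      have b2: "B2 t = al * (fst (x t) / X - fst (y t) / Y)" unfolding B2_def X_def Y_def
        by (simp add: algebra_simps)
      have "(B1 t)^2 + (B2 t)^2 = al^2 * ((snd (x t) / X - snd (y t) / Y)^2 + (fst (x t) / X - fst (y t) / Y)^2)"
        unfolding b1 b2 by (simp add: power2_eq_square algebra_simps)
      also have "\<dots> = al^2 * (u t / (X * Y))"
        using inv_id[OF X Y Xp] unfolding u_def by simp
      also have "\<dots> \<le> al^2 * (u t / (L^2 * L^2))"
        using XY L Xp unfolding u_def
        by (intro mult_left_mono divide_left_mono) (auto simp: add_nonneg_nonneg)
      also have "\<dots> = K^2 * u t" unfolding K_def by (simp add: power2_eq_square)
      finally have "(B1 t)^2 + (B2 t)^2 \<le> K^2 * ((fst (x t) - fst (y t))^2 + (snd (x t) - snd (y t))^2)"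
        unfolding u_def .
      from dot_bd[OF Kp this] show ?thesis unfolding u'_def u_def by (simp add: algebra_simps)
    qed
    show "u t \<ge> 0" if "t \<ge> 0" for t unfolding u_def by simp
    show "u 0 = 0" unfolding u_def using e0 by simp
  qed (use t in simp)
  fix t :: real assume "t \<ge> 0"
  from uz[OF this] show "x t = y t" unfolding u_def
    by (simp add: prod_eq_iff add_nonneg_eq_0_iff)
qed


lemma polar:
  fixes al b L :: real and x :: "real \<Rightarrow> real \<times> real" and th :: "real \<Rightarrow> real"
  assumes b: "b > 0" and L: "L > 0"
    and cx: "continuous_on {0..} x"
    and dx: "\<And>t. t > 0 \<Longrightarrow> (x has_vector_derivative Fv al b (x t)) (at t)"
    and lx: "\<And>t. t \<ge> 0 \<Longrightarrow> L \<le> norm (x t)"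
    and cth: "\<And>T. continuous_on {0..T} th"
    and dth: "\<And>t. t > 0 \<Longrightarrow> (th has_real_derivative (al - b * fst (x t)) / (norm (x t))^2) (at t)"
    and c0: "cos (th 0) = fst (x 0) / norm (x 0)" and s0: "sin (th 0) = snd (x 0) / norm (x 0)"
  shows "\<And>t. t \<ge> 0 \<Longrightarrow> x t = (norm (x t) * cos (th t), norm (x t) * sin (th t))"
proof -
  define p where "p t = fst (x t) * sin (th t) - snd (x t) * cos (th t)" for t
  define q where "q t = fst (x t) * cos (th t) + snd (x t) * sin (th t)" for t
  define lam where "lam t = - b * snd (x t) / (norm (x t))^2" for t
  define u where "u t = (p t)^2" for t
  define u' where "u' t = 2 * p t * (lam t * p t)" for t
  have n0: "norm (x 0) > 0" using lx[of 0] L by linarith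
  have pz: "u t = 0" if t: "t \<ge> 0" for t
  proof (rule gronwall0[where u = u and u' = u' and K = "2 * (b / L)"])
    show "continuous_on {0..T} u" for T
      unfolding u_def p_def
      by (intro continuous_intros continuous_on_subset[OF cx] cth) auto
    show "(u has_real_derivative u' t) (at t)" if tp: "t > 0" for t
    proof -
      define X where "X = (norm (x t))^2"
      have X: "X = (fst (x t))^2 + (snd (x t))^2" unfolding X_def by (rule norm_sq_pair)
      have "norm (x t) > 0" using lx[of t] tp L by linarith
      then have Xp: "X > 0" unfolding X_def by simp
      have d1: "((\<lambda>t. fst (x t)) has_real_derivative - (al * snd (x t) / X)) (at t)"
        using vd_fst[OF dx[OF tp]] by (simp add: Fv_def X_def)
      have d2: "((\<lambda>t. snd (x t)) has_real_derivative al * fst (x t) / X - b) (at t)"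
        using vd_snd[OF dx[OF tp]] by (simp add: Fv_def X_def)
      have d3: "(th has_real_derivative (al - b * fst (x t)) / X) (at t)"
        using dth[OF tp] by (simp add: X_def)
      have dp: "(p has_real_derivative
          (- (al * snd (x t) / X)) * sin (th t) + fst (x t) * (cos (th t) * ((al - b * fst (x t)) / X))
          - ((al * fst (x t) / X - b) * cos (th t) + snd (x t) * (- sin (th t) * ((al - b * fst (x t)) / X)))) (at t)"
        unfolding p_def by (rule derivative_eq_intros d1 d2 d3 refl | simp)+ (simp add: algebra_simps)
      have "(- (al * snd (x t) / X)) * sin (th t) + fst (x t) * (cos (th t) * ((al - b * fst (x t)) / X))
          - ((al * fst (x t) / X - b) * cos (th t) + snd (x t) * (- sin (th t) * ((al - b * fst (x t)) / X)))
          = lam t * p t"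
        unfolding lam_def p_def X_def[symmetric] using Xp
        by (simp add: field_simps) (simp add: X power2_eq_square algebra_simps)
      with dp have dp': "(p has_real_derivative lam t * p t) (at t)" by simp
      show ?thesis unfolding u_def u'_def
        by (rule derivative_eq_intros dp' refl | simp)+
    qed
    show "u' t \<le> 2 * (b / L) * u t" if tp: "t > 0" for t
    proof -
      have np: "norm (x t) \<ge> L" using lx[of t] tp by simp
      then have np': "norm (x t) > 0" using L by linarith
      have "- b * snd (x t) \<le> b * norm (x t)" using snd_bd[of "x t"] b
        by (metis abs_le_iff minus_mult_commute mult_le_cancel_left_pos neg_le_iff_le)
      then have "lam t \<le> b * norm (x t) / (norm (x t))^2" unfolding lam_def
        using np' by (intro divide_right_mono) auto
      also have "\<dots> = b / norm (x t)" using np' by (simp add: power2_eq_square)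
      also have "\<dots> \<le> b / L" using np np' L b by (intro divide_left_mono) auto
      finally have "lam t \<le> b / L" .
      then have lb: "lam t * (p t)^2 \<le> (b / L) * (p t)^2" by (intro mult_right_mono) auto
      have "u' t = 2 * (lam t * (p t)^2)" unfolding u'_def by (simp add: power2_eq_square algebra_simps)
      moreover have "2 * (b / L) * u t = 2 * ((b / L) * (p t)^2)" unfolding u_def by simp
      ultimately show ?thesis using lb by linarith
    qed
    show "u t \<ge> 0" if "t \<ge> 0" for t unfolding u_def by simp
    show "u 0 = 0" unfolding u_def p_def c0 s0 by (simp add: field_simps)
  qed (use t in simp)
  have p0: "p t = 0" if "t \<ge> 0" for t using pz[OF that] unfolding u_def by simp
  have pq: "(p t)^2 + (q t)^2 = (norm (x t))^2" for t
  proof -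
    have "(p t)^2 + (q t)^2 = ((fst (x t))^2 + (snd (x t))^2) * ((sin (th t))^2 + (cos (th t))^2)"
      unfolding p_def q_def power2_eq_square by algebra
    then show ?thesis by (simp add: norm_sq_pair)
  qed
  have cq: "continuous_on {0..T} q" for T
    unfolding q_def by (intro continuous_intros continuous_on_subset[OF cx] cth) auto
  have q0: "q 0 = norm (x 0)" unfolding q_def c0 s0 using n0
    by (simp add: field_simps norm_sq_pair power2_eq_square[symmetric])
  have qnz: "q t \<noteq> 0" if "t \<ge> 0" for t
  proof
    assume "q t = 0"
    then have "(norm (x t))^2 = 0" using pq[of t] p0[OF that] by simp
    then show False using lx[OF that] L by simp
  qed
  have qpos: "q t > 0" if t: "t \<ge> 0" for t
  proof (rule ccontr)
    assume "\<not> q t > 0"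
    then have "- q 0 \<le> 0" "0 \<le> - q t" using q0 n0 by auto
    moreover have "continuous_on {0..t} (\<lambda>s. - q s)" by (intro continuous_intros cq)
    ultimately obtain s where "0 \<le> s" "s \<le> t" "- q s = 0"
      using IVT'[of "\<lambda>s. - q s" 0 0 t] t by auto
    then show False using qnz by auto
  qed
  have qn: "q t = norm (x t)" if t: "t \<ge> 0" for t
  proof -
    have "(q t)^2 = (norm (x t))^2" using pq[of t] p0[OF t] by simp
    then show ?thesis using qpos[OF t] by (simp add: power2_eq_iff_nonneg)
  qed
  fix t :: real assume t: "t \<ge> 0"
  have "q t * cos (th t) + p t * sin (th t) = fst (x t) * ((sin (th t))^2 + (cos (th t))^2)"
    unfolding p_def q_def power2_eq_square by algebra
  then have e1: "fst (x t) = q t * cos (th t) + p t * sin (th t)" by simp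
  have "q t * sin (th t) - p t * cos (th t) = snd (x t) * ((sin (th t))^2 + (cos (th t))^2)"
    unfolding p_def q_def power2_eq_square by algebra
  then have e2: "snd (x t) = q t * sin (th t) - p t * cos (th t)" by simp
  show "x t = (norm (x t) * cos (th t), norm (x t) * sin (th t))"
    using e1 e2 qn[OF t] p0[OF t] by (simp add: prod_eq_iff)
qed



lemma core_periodic:
  fixes al b :: real and x :: "real \<Rightarrow> real \<times> real"
  assumes al: "al > 0" and b: "b > 0"
    and der: "\<forall>t\<ge>0. (x has_vector_derivative Fv al b (x t)) (at t within {0..})"
    and x0: "x 0 \<noteq> 0"
    and small: "norm (x 0) < al / (2 * b)"
    and small2: "al * ln (norm (x 0)) + b * norm (x 0) < al * ln (al / (2 * b)) - b * (al / (2 * b))"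
  shows "\<exists>T>0. \<forall>t\<ge>0. x (t + T) = x t"
proof -
  note bnd = core_bounds[OF al b der x0 small small2]
  define rs where "rs = al / (2 * b)"
  have brs: "b * rs = al / 2" unfolding rs_def using b by simp
  have rsp: "rs > 0" unfolding rs_def using al b by simp
  define E where "E = Hf al b (x 0)"
  define L where "L = exp ((E - b * rs) / al)"
  have Lp: "L > 0" unfolding L_def by simp
  have nb: "0 < norm (x t)" "norm (x t) < rs" "Hf al b (x t) = E" if "t \<ge> 0" for t
  proof -
    have "Hf al b (x t) = Hf al b (x 0) \<and> 0 < norm (x t) \<and> norm (x t) < al / (2 * b)"
      using bnd that by blast
    then show "0 < norm (x t)" "norm (x t) < rs" "Hf al b (x t) = E"
      unfolding rs_def E_def by blast+
  qed
  have lx: "L \<le> norm (x t)" if t: "t \<ge> 0" for t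
  proof -
    have "al * ln (norm (x t)) = E + b * fst (x t)" using nb(3)[OF t] unfolding Hf_def by simp
    also have "\<dots> \<ge> E - b * norm (x t)" using fst_mul_bd[of b "x t"] b by simp
    finally have "al * ln (norm (x t)) \<ge> E - b * norm (x t)" .
    moreover have "b * norm (x t) \<le> b * rs" using nb(2)[OF t] b by simp
    ultimately have "al * ln (norm (x t)) \<ge> E - b * rs" by simp
    then have "ln (norm (x t)) \<ge> (E - b * rs) / al" using al by (simp add: field_simps)
    then have "exp ((E - b * rs) / al) \<le> norm (x t)" using nb(1)[OF t]
      by (metis exp_le_cancel_iff exp_ln)
    then show ?thesis unfolding L_def .
  qed
  have cx: "continuous_on {0..} x"
    by (rule continuous_on_vector_derivative) (use der in auto)
  have dx: "(x has_vector_derivative Fv al b (x t)) (at t)" if "t > 0" for t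
    using der_at[OF der that] .
  define om where "om t = (al - b * fst (x t)) / (norm (x t))^2" for t
  have com: "continuous_on {0..} om" unfolding om_def
  proof (intro continuous_on_divide continuous_intros cx ballI)
    fix t :: real assume "t \<in> {0..}"
    then have "0 < norm (x t)" using nb(1) by simp
    then show "(norm (x t))^2 \<noteq> 0" by simp
  qed
  define w0 where "w0 = (al / 2) / rs^2"
  have w0p: "w0 > 0" unfolding w0_def using al rsp by simp
  have omb: "om t \<ge> w0" if t: "t \<ge> 0" for t
  proof -
    have "al - b * fst (x t) \<ge> al - b * norm (x t)" using fst_mul_bd[of b "x t"] b by simp
    moreover have "b * norm (x t) \<le> b * rs" using nb(2)[OF t] b by simp
    ultimately have num: "al - b * fst (x t) \<ge> al / 2" using brs by simp
    have "(norm (x t))^2 \<le> rs^2" using nb(1,2)[OF t] by (intro power_mono) auto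
    moreover have "(norm (x t))^2 > 0" using nb(1)[OF t] by simp
    ultimately have "(al / 2) / rs^2 \<le> (al / 2) / (norm (x t))^2" using al rsp
      by (intro divide_left_mono) auto
    also have "\<dots> \<le> (al - b * fst (x t)) / (norm (x t))^2"
      using num \<open>(norm (x t))^2 > 0\<close> by (intro divide_right_mono) auto
    finally show ?thesis unfolding om_def w0_def .
  qed
  define n0 where "n0 = norm (x 0)"
  have n0p: "n0 > 0" unfolding n0_def using x0 by simp
  have "(fst (x 0) / n0)^2 + (snd (x 0) / n0)^2 = 1"
    using n0p unfolding n0_def by (simp add: power_divide norm_sq_pair[symmetric] add_divide_distrib[symmetric])
  then obtain th0 where th0: "cos th0 = fst (x 0) / n0" "sin th0 = snd (x 0) / n0"
    using sincos_total_2pi by metis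
  define th where "th t = th0 + integral {0..t} om" for t
  have th00: "th 0 = th0" unfolding th_def by simp
  have cth: "continuous_on {0..T} th" for T
  proof -
    have "continuous_on {0..T} om" by (rule continuous_on_subset[OF com]) auto
    then have "continuous_on {0..T} (\<lambda>t. integral {0..t} om)"
      by (intro indefinite_integral_continuous_1 integrable_continuous_real)
    then show ?thesis unfolding th_def by (intro continuous_intros)
  qed
  have dth: "(th has_real_derivative om t) (at t)" if tp: "t > 0" for t
  proof -
    have "continuous_on {0..t+1} om" by (rule continuous_on_subset[OF com]) auto
    from integral_has_real_derivative[OF this, of t]
    have "((\<lambda>u. integral {0..u} om) has_real_derivative om t) (at t within {0..t+1})"
      using tp by simp
    moreover have "at t within {0..t+1} = at t"
      by (rule at_within_interior) (use tp in simp)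
    ultimately have d: "((\<lambda>u. integral {0..u} om) has_real_derivative om t) (at t)" by simp
    show ?thesis unfolding th_def using DERIV_add[OF DERIV_const[of th0] d] by simp
  qed
  have rep: "x t = (norm (x t) * cos (th t), norm (x t) * sin (th t))" if "t \<ge> 0" for t
    by (rule polar[OF b Lp cx dx lx cth dth[unfolded om_def]])
       (use th0 th00 that in \<open>auto simp: n0_def\<close>)
  define Tm where "Tm = 2 * pi / w0"
  have Tmp: "Tm > 0" unfolding Tm_def using w0p by simp
  obtain z where z: "0 < z" "z < Tm" "th Tm - th 0 = (Tm - 0) * om z"
    using mvt_helper[OF Tmp cth dth] by blast
  have "Tm * om z \<ge> Tm * w0" using omb[of z] z Tmp by (intro mult_left_mono) auto
  then have thT: "th Tm \<ge> th0 + 2 * pi" using z(3) th00 w0p unfolding Tm_def by simp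
  obtain t1 where t1: "0 \<le> t1" "t1 \<le> Tm" "th t1 = th0 + 2 * pi"
    using IVT'[of th 0 "th0 + 2 * pi" Tm, OF _ thT _ cth] th00 Tmp by auto
  have "t1 \<noteq> 0" using t1(3) th00 pi_gt_zero by auto
  with t1(1) have t1p: "t1 > 0" by simp
  define n1 where "n1 = norm (x t1)"
  have x1: "x t1 = (n1 * cos th0, n1 * sin th0)"
    using rep[OF t1(1)] t1(3) unfolding n1_def by simp
  have xx0: "x 0 = (n0 * cos th0, n0 * sin th0)"
    using rep[of 0] th00 unfolding n0_def by simp
  have "Hf al b (x t1) = Hf al b (x 0)" using nb(3)[OF t1(1)] nb(3)[of 0] by simp
  then have Heq: "al * ln n1 - b * (n1 * cos th0) = al * ln n0 - b * (n0 * cos th0)"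
    unfolding Hf_def n1_def[symmetric] n0_def[symmetric] using x1 xx0 by simp
  have n1b: "0 < n1" "n1 < rs" using nb[OF t1(1)] unfolding n1_def by auto
  have n0b: "n0 < rs" using nb[of 0] unfolding n0_def by auto
  have "n1 = n0"
  proof (rule ccontr)
    assume "n1 \<noteq> n0"
    then consider "n1 < n0" | "n0 < n1" by linarith
    then show False
    proof cases
      case 1
      from Hray_mono[OF al b cos_le_one[of th0] n1b(1) 1 n0b[unfolded rs_def]] Heq show False by simp
    next
      case 2
      from Hray_mono[OF al b cos_le_one[of th0] n0p 2 n1b(2)[unfolded rs_def]] Heq show False by simp
    qed
  qed
  then have xe: "x t1 = x 0" using x1 xx0 by simp
  define y where "y t = x (t + t1)" for t
  have cy: "continuous_on {0..} y" unfolding y_def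
    by (rule continuous_on_compose2[OF cx]) (auto intro: continuous_intros simp: t1(1))
  have dy: "(y has_vector_derivative Fv al b (y t)) (at t)" if tp: "t > 0" for t
  proof -
    have "((\<lambda>t. t + t1) has_vector_derivative 1) (at t)"
      using has_real_derivative_iff_has_vector_derivative[THEN iffD1, OF DERIV_add[OF DERIV_ident DERIV_const[of t1]]]
      by simp
    from vector_diff_chain_at[OF this dx[of "t + t1"]] tp t1p
    show ?thesis unfolding y_def by (simp add: o_def)
  qed
  have ly: "L \<le> norm (y t)" if "t \<ge> 0" for t unfolding y_def using lx that t1p by simp
  have y0: "x 0 = y 0" unfolding y_def using xe by simp
  have xy: "x t = y t" if "t \<ge> 0" for t
    by (rule uniq[OF al Lp cx cy dx dy lx ly y0 that])
  show ?thesis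
  proof (intro exI[of _ t1] conjI allI impI)
    show "t1 > 0" by (rule t1p)
    fix t :: real assume "t \<ge> 0"
    from xy[OF this] show "x (t + t1) = x t" unfolding y_def by (rule sym)
  qed
qed



lemma DT_inv_bd:
  assumes "0 < c" "c \<le> C"
  shows "norm y / C \<le> norm (((fst y) / C, (snd y) / c) :: real \<times> real)"
proof -
  have Cp: "C > 0" using assms by simp
  have "(norm y / C)^2 = (fst y)^2 / C^2 + (snd y)^2 / C^2"
    by (simp add: power_divide norm_sq_pair add_divide_distrib)
  also have "(snd y)^2 / C^2 \<le> (snd y)^2 / c^2"
    using assms by (intro divide_left_mono power_mono mult_pos_pos) auto
  then have "(fst y)^2 / C^2 + (snd y)^2 / C^2 \<le> (fst y / C)^2 + (snd y / c)^2"
    by (simp add: power_divide)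
  also have "\<dots> = (norm (((fst y) / C, (snd y) / c) :: real \<times> real))^2"
    by (simp add: norm_sq_pair)
  finally show ?thesis by (rule power2_le_imp_le) simp
qed


theorem lemma5p1:
  fixes h r0 a1 a2 rho0 beta :: real
  assumes "h > 0" and "r0 > 0" and "a1 > \<bar>a2\<bar>" and "rho0 > 0"
    and "beta > 0"
    and "beta < (h^2 + h * sqrt (h^2 + r0^2)) / (r0^2 + h^2 + h * sqrt (h^2 + r0^2))"
  shows "\<forall>k::nat. \<exists>N0::nat. \<forall>n::nat. n > N0 \<longrightarrow>
    (\<forall>(P1::real \<times> real) (P2::real \<times> real) (x::real \<Rightarrow> real \<times> real).
      dist P1 P2 = 4 * rho0 / real n \<longrightarrow>
      x 0 = DT h r0 (P1 - P2) \<longrightarrow>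
      (\<forall>t\<ge>0. (x has_vector_derivative Ham_field h r0 a1 a2 (x t)) (at t within {0..})) \<longrightarrow>
      (let rho = beta * rho0 / real n;
           E = Ham h r0 a1 a2 (x 0);
           CE = exp (2 * E / ((a1 + a2) * A_const h r0))
       in CE < C_star h r0 a1 a2 \<and>
          (\<exists>TE > 0. (\<forall>t\<ge>0. x (t + TE) = x t) \<and>
             (\<forall>t\<in>{0..real (k + 1) * TE}. norm (DT_inv h r0 (x t)) \<ge> 4 * rho))))"
proof (intro allI)
  fix k :: nat
  note h = assms(1) and r0 = assms(2) and a = assms(3) and rho0 = assms(4) and bet = assms(5)
  define Dh where "Dh = h^2 + h * sqrt (h^2 + r0^2)"
  have Dhp: "Dh > 0" unfolding Dh_def using h by (simp add: add_pos_nonneg)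
  define c where "c = c0 h r0"
  define C where "C = C0 h r0"
  have cp: "c > 0" unfolding c_def c0_def tau_def by simp
  have Cc: "C = c * (1 + r0^2 / Dh)" unfolding C_def C0_def c_def c0_def Dh_def by simp
  have cC: "c \<le> C" unfolding Cc using cp Dhp by simp
  have Cp: "C > 0" using cp cC by simp
  have C2: "C = c * ((Dh + r0^2) / Dh)" unfolding Cc using Dhp by (simp add: field_simps)
  have DDp: "Dh + r0^2 > 0" using Dhp by (simp add: add_pos_nonneg)
  have "c / C = Dh / (Dh + r0^2)" unfolding C2 using cp Dhp DDp by simp
  then have ratio: "Dh / (r0^2 + Dh) = c / C" by (simp add: add.commute)
  have "beta < c / C" using assms(6) ratio unfolding Dh_def by (simp add: add.assoc)
  then have bC: "beta * C < c" using Cp by (simp add: field_simps)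
  define Ac where "Ac = A_const h r0"
  define Bc where "Bc = B_const h r0"
  have Acp: "Ac > 0" unfolding Ac_def A_const_def using h r0
    by (intro divide_pos_pos mult_pos_pos add_pos_nonneg) (auto simp: add_pos_nonneg)
  have Bcp: "Bc > 0" unfolding Bc_def B_const_def tau_def using h r0
    by (intro divide_pos_pos mult_pos_pos) (auto simp: add_pos_nonneg)
  define al where "al = (a1 + a2) * Ac"
  define bb where "bb = (a1 - a2) * Bc"
  have alp: "al > 0" unfolding al_def using a Acp by simp
  have bbp: "bb > 0" unfolding bb_def using a Bcp by simp
  define rs where "rs = al / (2 * bb)"
  have rsp: "rs > 0" unfolding rs_def using alp bbp by simp
  have brs: "bb * rs = al / 2" unfolding rs_def using bbp by simp
  define lam where "lam = ln (c / (beta * C))"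
  have "1 < c / (beta * C)" using bC bet Cp by (simp add: field_simps)
  then have lamp: "lam > 0" unfolding lam_def by (rule ln_gt_zero)
  define del where "del = min (rs * exp (-2) / C) (lam * al / ((1 + exp 1) * bb * C))"
  have delp: "del > 0" unfolding del_def using rsp Cp lamp alp bbp by (simp add: add_pos_pos)
  define N0 where "N0 = nat \<lceil>4 * rho0 / del\<rceil>"
  have HF: "Ham_field h r0 a1 a2 = Fv al bb"
    by (rule ext) (simp add: Ham_field_def Fv_def al_def bb_def Ac_def Bc_def)
  have HH: "Ham h r0 a1 a2 = Hf al bb"
    by (rule ext) (simp add: Ham_def Hf_def al_def bb_def Ac_def Bc_def)
  have Cst: "C_star h r0 a1 a2 = (2 * rs / exp 1)^2"
  proof -
    have "a_prime h r0 a1 a2 = rs"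
      unfolding a_prime_def rs_def al_def bb_def Ac_def Bc_def by (simp add: mult.assoc)
    then show ?thesis unfolding C_star_def by simp
  qed
  show "\<exists>N0::nat. \<forall>n::nat. n > N0 \<longrightarrow>
    (\<forall>(P1::real \<times> real) (P2::real \<times> real) (x::real \<Rightarrow> real \<times> real).
      dist P1 P2 = 4 * rho0 / real n \<longrightarrow>
      x 0 = DT h r0 (P1 - P2) \<longrightarrow>
      (\<forall>t\<ge>0. (x has_vector_derivative Ham_field h r0 a1 a2 (x t)) (at t within {0..})) \<longrightarrow>
      (let rho = beta * rho0 / real n;
           E = Ham h r0 a1 a2 (x 0);
           CE = exp (2 * E / ((a1 + a2) * A_const h r0))
       in CE < C_star h r0 a1 a2 \<and>
          (\<exists>TE > 0. (\<forall>t\<ge>0. x (t + TE) = x t) \<and>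
             (\<forall>t\<in>{0..real (k + 1) * TE}. norm (DT_inv h r0 (x t)) \<ge> 4 * rho))))"
  proof (intro exI[of _ N0] allI impI)
    fix n :: nat and P1 P2 :: "real \<times> real" and x :: "real \<Rightarrow> real \<times> real"
    assume nN: "n > N0" and dP: "dist P1 P2 = 4 * rho0 / real n"
      and x0: "x 0 = DT h r0 (P1 - P2)"
      and der0: "\<forall>t\<ge>0. (x has_vector_derivative Ham_field h r0 a1 a2 (x t)) (at t within {0..})"
    have der: "\<forall>t\<ge>0. (x has_vector_derivative Fv al bb (x t)) (at t within {0..})"
      using der0 unfolding HF .
    define d where "d = 4 * rho0 / real n"
    have npos: "real n > 0" using nN by simp
    have dp: "d > 0" unfolding d_def using rho0 npos by simp
    have "real n > 4 * rho0 / del"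
    proof -
      have "4 * rho0 / del \<le> real N0" unfolding N0_def by linarith
      also have "\<dots> < real n" using nN by simp
      finally show ?thesis .
    qed
    then have "4 * rho0 < real n * del" using delp by (simp add: field_simps)
    then have dd: "d < del" unfolding d_def using npos by (simp add: field_simps)
    define v where "v = P1 - P2"
    have nv: "norm v = d" unfolding v_def d_def using dP by (simp add: dist_norm)
    have y0: "x 0 = (C * fst v, c * snd v)" using x0 unfolding DT_def v_def C_def c_def by simp
    define n0 where "n0 = norm (x 0)"
    have n0sq: "n0^2 = C^2 * (fst v)^2 + c^2 * (snd v)^2"
      unfolding n0_def y0 by (simp add: norm_sq_pair power_mult_distrib)
    have vsq: "d^2 = (fst v)^2 + (snd v)^2" using nv norm_sq_pair[of v] by simp
    have cC2: "c^2 \<le> C^2" by (rule power_mono[OF cC]) (use cp in simp)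
    have "c^2 * (snd v)^2 \<le> C^2 * (snd v)^2" by (rule mult_right_mono[OF cC2]) simp
    then have "n0^2 \<le> C^2 * ((fst v)^2 + (snd v)^2)" unfolding n0sq by (simp add: distrib_left)
    then have "n0^2 \<le> (C * d)^2" using vsq by (simp add: power_mult_distrib)
    then have n0u: "n0 \<le> C * d" by (rule power2_le_imp_le) (use Cp dp in simp)
    have "c^2 * (fst v)^2 \<le> C^2 * (fst v)^2" by (rule mult_right_mono[OF cC2]) simp
    then have "c^2 * ((fst v)^2 + (snd v)^2) \<le> n0^2" unfolding n0sq by (simp add: distrib_left)
    then have "(c * d)^2 \<le> n0^2" using vsq by (simp add: power_mult_distrib)
    then have n0l: "c * d \<le> n0" by (rule power2_le_imp_le) (simp add: n0_def)
    have n0p: "n0 > 0" using n0l mult_pos_pos[OF cp dp] by linarith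
    have "d < rs * exp (-2) / C" using dd unfolding del_def by simp
    then have Cd1: "C * d < rs * exp (-2)" using Cp by (simp add: pos_less_divide_eq mult.commute)
    have eqQ: "lam * al / ((1 + exp 1) * bb * C) = (lam * al / ((1 + exp 1) * bb)) / C" by simp
    have "d < (lam * al / ((1 + exp 1) * bb)) / C" using dd unfolding del_def eqQ by simp
    then have Cd2: "C * d < lam * al / ((1 + exp 1) * bb)" using Cp
      by (simp only: pos_less_divide_eq mult.commute)
    have e2: "exp (-2::real) < 1" by simp
    have n0rs: "n0 < rs * exp (-2)" using n0u Cd1 by simp
    have "rs * exp (-2) < rs" using rsp e2 by simp
    then have small: "norm (x 0) < al / (2 * bb)"
      using n0rs unfolding n0_def rs_def by linarith
    have xnz: "x 0 \<noteq> 0" using n0p unfolding n0_def by simp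
    have lnn0: "ln n0 \<le> ln rs - 2"
    proof -
      have "ln n0 \<le> ln (rs * exp (-2))" using n0p n0rs by simp
      also have "\<dots> = ln rs - 2" using rsp by (simp add: ln_mult)
      finally show ?thesis .
    qed
    have bn0: "bb * n0 < al / 2" using small bbp brs unfolding n0_def rs_def[symmetric]
      by (metis mult_strict_left_mono)
    have small2: "al * ln (norm (x 0)) + bb * norm (x 0) < al * ln (al / (2 * bb)) - bb * (al / (2 * bb))"
    proof -
      have "al * ln n0 \<le> al * (ln rs - 2)" using lnn0 alp by (simp add: mult_left_mono)
      then show ?thesis using bn0 brs alp unfolding n0_def[symmetric] rs_def[symmetric]
        by (simp add: algebra_simps)
    qed
    note bnd = core_bounds[OF alp bbp der xnz small small2]
    obtain TE where TE: "TE > 0" "\<forall>t\<ge>0. x (t + TE) = x t"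
      using core_periodic[OF alp bbp der xnz small small2] by blast
    define E where "E = Hf al bb (x 0)"
    have Eub: "E \<le> al * ln n0 + bb * n0" unfolding E_def Hf_def n0_def
      using fst_mul_bd[of bb "x 0"] bbp by simp
    have CE: "exp (2 * E / al) < (2 * rs / exp 1)^2"
    proof -
      have "2 * E / al \<le> 2 * ln n0 + 2 * (bb * n0) / al" using Eub alp by (simp add: field_simps)
      also have "\<dots> < 2 * ln n0 + 1" using bn0 alp by (simp add: field_simps)
      finally have "exp (2 * E / al) < exp (2 * ln n0 + 1)" by simp
      also have "\<dots> = n0^2 * exp 1"
      proof -
        have "exp (2 * ln n0 + 1) = exp (ln n0 + ln n0 + 1)" by simp
        also have "\<dots> = exp (ln n0) * exp (ln n0) * exp 1" by (simp only: exp_add)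
        finally show ?thesis using n0p by (simp add: power2_eq_square)
      qed
      also have "\<dots> \<le> (rs * exp (-2))^2 * exp 1" using n0rs n0p
        by (intro mult_right_mono power_mono) auto
      also have "\<dots> = rs^2 * exp (-3)"
      proof -
        have "exp (-2) * exp (-2) * exp 1 = exp ((-2) + (-2) + (1::real))" by (simp only: exp_add)
        also have "\<dots> = exp (-3)" by simp
        finally have E3: "exp (-3::real) = exp (-2) * exp (-2) * exp 1" by simp
        show ?thesis unfolding E3 by (simp add: power2_eq_square algebra_simps)
      qed
      also have "\<dots> < (2 * rs / exp 1)^2"
      proof -
        have "exp (-3::real) < exp (-2)" by simp
        moreover have "exp (-2::real) \<le> 4 * exp (-2)" by simp
        ultimately have "exp (-3::real) < 4 * exp (-2)" by linarith
        moreover have "(2 * rs / exp 1)^2 = rs^2 * (4 * exp (-2))"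
          by (simp add: power_divide power_mult_distrib exp_minus power2_eq_square field_simps mult_exp_exp)
        ultimately show ?thesis using rsp by simp
      qed
      finally show ?thesis .
    qed
    have lowb: "beta * d \<le> norm (DT_inv h r0 (x t))" if t: "t \<ge> 0" for t
    proof -
      define nt where "nt = norm (x t)"
      have ntp: "nt > 0" "nt < rs" "Hf al bb (x t) = E"
        using bnd t unfolding nt_def rs_def E_def by blast+
      have cons: "al * ln nt - bb * fst (x t) = al * ln n0 - bb * fst (x 0)"
        using ntp(3) unfolding E_def Hf_def nt_def n0_def by simp
      have f1: "- (bb * nt) \<le> bb * fst (x t)" "bb * fst (x t) \<le> bb * nt"
        using fst_mul_bd[of bb "x t"] bbp unfolding nt_def by auto
      have f0: "- (bb * n0) \<le> bb * fst (x 0)" "bb * fst (x 0) \<le> bb * n0"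
        using fst_mul_bd[of bb "x 0"] bbp unfolding n0_def by auto
      have "bb * nt < bb * rs" using ntp(2) bbp by simp
      then have "al * ln nt \<le> al * ln n0 + al" using cons f1 f0 brs bn0 by linarith
      then have "al * ln nt \<le> al * (ln n0 + 1)" by (simp add: algebra_simps)
      then have "ln nt \<le> ln n0 + 1" using alp by simp
      then have "nt \<le> exp (ln n0 + 1)" using ntp(1) by (metis exp_le_cancel_iff exp_ln)
      then have ntu: "nt \<le> n0 * exp 1" using n0p by (simp add: exp_add)
      have "al * ln nt \<ge> al * ln n0 - bb * n0 - bb * nt" using cons f1 f0 by linarith
      moreover have "bb * nt \<le> bb * (n0 * exp 1)" using ntu bbp by simp
      ultimately have "al * ln nt \<ge> al * ln n0 - (1 + exp 1) * bb * n0"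
        by (simp add: algebra_simps)
      moreover have "(1 + exp 1) * bb * n0 \<le> (1 + exp 1) * bb * (C * d)"
        using n0u bbp by (intro mult_left_mono) (auto simp: add_pos_pos)
      moreover have "(1 + exp 1) * bb * (C * d) < lam * al"
        using Cd2 bbp by (simp add: field_simps add_pos_pos)
      ultimately have "al * ln nt > al * ln n0 - lam * al" by linarith
      then have "al * ln nt > al * (ln n0 - lam)" by (simp add: algebra_simps)
      then have "ln nt > ln n0 - lam" using alp by simp
      moreover have "ln n0 \<ge> ln (c * d)" using n0l mult_pos_pos[OF cp dp] by (rule ln_mono)
      moreover have "ln (c * d) - lam = ln (beta * C * d)" unfolding lam_def
        using cp dp bet Cp by (simp add: ln_mult ln_div)
      ultimately have "ln nt > ln (beta * C * d)" by linarith
      then have "nt > beta * C * d" using ntp(1) bet Cp dp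
        by (metis ln_less_cancel_iff mult_pos_pos)
      then have "nt / C > beta * d" using Cp by (simp add: field_simps)
      moreover have "nt / C \<le> norm (DT_inv h r0 (x t))"
        unfolding DT_inv_def nt_def C_def using DT_inv_bd[OF cp cC] unfolding C_def c_def by simp
      ultimately show ?thesis by simp
    qed
    show "let rho = beta * rho0 / real n;
           E = Ham h r0 a1 a2 (x 0);
           CE = exp (2 * E / ((a1 + a2) * A_const h r0))
       in CE < C_star h r0 a1 a2 \<and>
          (\<exists>TE > 0. (\<forall>t\<ge>0. x (t + TE) = x t) \<and>
             (\<forall>t\<in>{0..real (k + 1) * TE}. norm (DT_inv h r0 (x t)) \<ge> 4 * rho))"
      unfolding Let_def
    proof (intro conjI)
      show "exp (2 * Ham h r0 a1 a2 (x 0) / ((a1 + a2) * A_const h r0)) < C_star h r0 a1 a2"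
        using CE unfolding HH Cst E_def al_def Ac_def .
      show "\<exists>TE > 0. (\<forall>t\<ge>0. x (t + TE) = x t) \<and>
             (\<forall>t\<in>{0..real (k + 1) * TE}. norm (DT_inv h r0 (x t)) \<ge> 4 * (beta * rho0 / real n))"
      proof (intro exI[of _ TE] conjI ballI)
        show "TE > 0" "\<forall>t\<ge>0. x (t + TE) = x t" using TE by auto
        fix t assume "t \<in> {0..real (k + 1) * TE}"
        then have "t \<ge> 0" by simp
        from lowb[OF this] show "norm (DT_inv h r0 (x t)) \<ge> 4 * (beta * rho0 / real n)"
          unfolding d_def by (simp add: algebra_simps)
      qed
    qed
  qed
qed

end
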